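(* Let $K\subset\mathbb R^m$ be a smooth cone, $A:\mathbb R^n\to\mathbb R^m$ linear, $b\in\mathbb R^m$, with $S=\{x: Ax+b\in K\}\neq\emptyset$, and assume $\{0\}\neq\operatorname{Im}A\cap K\subset\operatorname{bd}K$. Then: (i) if $\dim(\operatorname{Im}A)\neq1$ and $b\in\operatorname{Im}A$, then $\mathrm{ACQ}(S)$ does not hold and the inclusion $Ax+b\in K$ has no global error bound; (ii) if $\dim(\operatorname{Im}A)\neq1$ and $b\notin\operatorname{Im}A$, then $\mathrm{ACQ}(S)$ holds but the inclusion has no global error bound; (iii) if $\dim(\operatorname{Im}A)=1$, then the inclusion has a global error bound.
   Context: $\mathrm{ACQ}(S)$ means $A^*[N_K(Ax+b)]=N_S(x)$ for all $x\in S$, where $A^*$ is the adjoint and $N_D(x)$ the normal cone of a convex set. A global error bound means there is $\alpha>0$ with $d(x,S)\le\alpha\,d(Ax+b,K)$ for all $x\in\mathbb R^n$, $d(x,D)=\inf_{y\in D}\|x-y\|$. A cone is regular if pointed, closed, convex, with nonempty interior. A regular cone $C$ is smooth if every boundary point lies on an extreme ray of $C$ (a ray $\{\lambda x:\lambda\ge0\}$, $x\ne0$, which is a face of $C$) and, for every non-zero point $x$ of any extreme ray, $N_C(x)$ has dimension one. *)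

theory Defs
  imports "HOL-Analysis.Analysis"
begin

definition normal_cone :: "'a::real_inner set \<Rightarrow> 'a \<Rightarrow> 'a set" where
  "normal_cone D x = (if x \<in> D then {v. \<forall>y\<in>D. inner v (y - x) \<le> 0} else {})"

definition regular_cone :: "'a::euclidean_space set \<Rightarrow> bool" where
  "regular_cone C \<longleftrightarrow> cone C \<and> convex C \<and> closed C \<and> C \<inter> uminus ` C = {0}
     \<and> interior C \<noteq> {}"

definition ray :: "'a::real_vector \<Rightarrow> 'a set" where
  "ray x = {l *\<^sub>R x | l. l \<ge> 0}"

definition extreme_ray :: "'a::real_vector set \<Rightarrow> 'a set \<Rightarrow> bool" where
  "extreme_ray C R \<longleftrightarrow> (\<exists>x. x \<noteq> 0 \<and> R = ray x \<and> R face_of C)"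

definition smooth_cone :: "'a::euclidean_space set \<Rightarrow> bool" where
  "smooth_cone C \<longleftrightarrow> regular_cone C
     \<and> (\<forall>x\<in>frontier C. \<exists>R. extreme_ray C R \<and> x \<in> R)
     \<and> (\<forall>R x. extreme_ray C R \<and> x \<in> R \<and> x \<noteq> 0 \<longrightarrow> aff_dim (normal_cone C x) = 1)"

definition ACQ :: "('a::real_inner \<Rightarrow> 'b::real_inner) \<Rightarrow> 'b \<Rightarrow> 'b set \<Rightarrow> bool" where
  "ACQ A b K \<longleftrightarrow> (\<forall>x\<in>{x. A x + b \<in> K}.
      adjoint A ` normal_cone K (A x + b) = normal_cone {x. A x + b \<in> K} x)"

definition global_error_bound :: "('a::real_inner \<Rightarrow> 'b::real_inner) \<Rightarrow> 'b \<Rightarrow> 'b set \<Rightarrow> bool" where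
  "global_error_bound A b K \<longleftrightarrow> (\<exists>\<alpha>>0. \<forall>x.
      infdist x {x. A x + b \<in> K} \<le> \<alpha> * infdist (A x + b) K)"

end

theory Submission
  imports Defs
begin

lemma nc_iff: "v \<in> normal_cone K p \<longleftrightarrow> p \<in> K \<and> (\<forall>y\<in>K. inner v (y - p) \<le> 0)"
  by (simp add: normal_cone_def)

lemma nc_scale: "v \<in> normal_cone K p \<Longrightarrow> c \<ge> 0 \<Longrightarrow> c *\<^sub>R v \<in> normal_cone K p"
  by (auto simp: nc_iff mult_nonneg_nonpos)

lemma cone_add:
  assumes "cone K" "convex K" "a \<in> K" "b \<in> K" shows "a + b \<in> K"
proof -
  have "(1/2::real) *\<^sub>R a + (1/2::real) *\<^sub>R b \<in> K"
    using assms by (intro convexD) auto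
  then have "(2::real) *\<^sub>R ((1/2::real) *\<^sub>R a + (1/2::real) *\<^sub>R b) \<in> K"
    using assms(1) by (simp add: cone_def)
  then show ?thesis by (simp add: scaleR_add_right)
qed

lemma nc_int:
  fixes K :: "'a::real_inner set"
  assumes "v \<in> normal_cone K p" "v \<noteq> 0" "k \<in> interior K"
  shows "inner v (k - p) < 0"
proof -
  obtain e where e: "e > 0" "ball k e \<subseteq> K" using assms(3) mem_interior by blast
  define k' where "k' = k + (e/2/norm v) *\<^sub>R v"
  have "dist k k' < e" using e assms(2) by (simp add: k'_def dist_norm)
  then have "k' \<in> K" using e by auto
  then have "inner v (k' - p) \<le> 0" using assms(1) by (simp add: nc_iff)
  moreover have "inner v (k' - p) = inner v (k - p) + (e/2/norm v) * (norm v)^2"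
    by (simp add: k'_def inner_diff_right inner_add_right power2_norm_eq_inner)
  moreover have "(e/2/norm v) * (norm v)^2 > 0" using e assms(2) by simp
  ultimately show ?thesis by linarith
qed

lemma regular_props:
  assumes "regular_cone K"
  shows "cone K" "convex K" "closed K" "K \<inter> uminus ` K = {0}" "interior K \<noteq> {}"
  using assms by (auto simp: regular_cone_def)

lemma pointed:
  assumes "regular_cone K" "x \<in> K" "- x \<in> K" shows "x = 0"
proof -
  have "x \<in> uminus ` K" using assms(3) by (metis image_eqI minus_minus)
  then show ?thesis using regular_props(4)[OF assms(1)] assms(2) by blast
qed

lemma nc_pm:
  fixes K :: "'a::euclidean_space set"
  assumes "regular_cone K" "u \<in> normal_cone K p" "- u \<in> normal_cone K p"
  shows "u = 0"
proof (rule ccontr)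
  assume "u \<noteq> 0"
  obtain k where k: "k \<in> interior K" using regular_props(5)[OF assms(1)] by blast
  have "inner u (k - p) < 0" using nc_int[OF assms(2) \<open>u\<noteq>0\<close> k] .
  moreover have "inner (-u) (k - p) < 0" using nc_int[OF assms(3) _ k] \<open>u\<noteq>0\<close> by simp
  ultimately show False by simp
qed

lemma face_lemma:
  fixes K :: "'a::euclidean_space set"
  assumes sm: "smooth_cone K" and p: "p \<in> K" and q: "q \<in> K" "q \<noteq> 0" and fr: "p + q \<in> frontier K"
  shows "\<exists>l\<ge>0. p = l *\<^sub>R q"
proof (cases "p = q")
  case True then show ?thesis by (intro exI[of _ 1]) auto
next
  case False
  have reg: "regular_cone K" using sm by (simp add: smooth_cone_def)
  obtain R where R: "extreme_ray K R" "p + q \<in> R" using sm fr by (auto simp: smooth_cone_def)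
  then obtain r where r: "r \<noteq> 0" "R = ray r" "R face_of K" by (auto simp: extreme_ray_def)
  have c: "cone K" using regular_props[OF reg] by auto
  have 2: "(2::real) *\<^sub>R p \<in> K" "(2::real) *\<^sub>R q \<in> K" using c p q by (auto simp: cone_def)
  have "p + q \<in> open_segment ((2::real) *\<^sub>R p) ((2::real) *\<^sub>R q)"
  proof -
    have "p + q = (1 - (1/2::real)) *\<^sub>R ((2::real) *\<^sub>R p) + (1/2::real) *\<^sub>R ((2::real) *\<^sub>R q)"
      by (simp add: scaleR_add_right)
    moreover have "(2::real) *\<^sub>R p \<noteq> (2::real) *\<^sub>R q" using False by simp
    ultimately show ?thesis unfolding in_segment by (intro conjI exI[of _ "1/2"]) auto
  qed
  then have "(2::real) *\<^sub>R p \<in> R \<and> (2::real) *\<^sub>R q \<in> R"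
    using r(3) R(2) 2 unfolding face_of_def by blast
  then obtain l1 l2 where l: "l1 \<ge> 0" "l2 \<ge> 0" "(2::real) *\<^sub>R p = l1 *\<^sub>R r" "(2::real) *\<^sub>R q = l2 *\<^sub>R r"
    using r(2) by (auto simp: ray_def)
  have "l2 \<noteq> 0" using l(4) q(2) by auto
  have "p = (l1/l2) *\<^sub>R q"
  proof -
    have "p = (l1/2) *\<^sub>R r" using l(3) by (metis divide_inverse_commute scaleR_scaleR inverse_eq_divide scaleR_one nonzero_divide_eq_eq zero_neq_numeral divide_self_if)
    moreover have "q = (l2/2) *\<^sub>R r" using l(4) by (metis divide_inverse_commute scaleR_scaleR inverse_eq_divide scaleR_one nonzero_divide_eq_eq zero_neq_numeral divide_self_if)
    ultimately show ?thesis using \<open>l2 \<noteq> 0\<close> by simp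
  qed
  then show ?thesis using l by (intro exI[of _ "l1/l2"]) auto
qed


lemma unique_normal:
  fixes K :: "'a::euclidean_space set"
  assumes sm: "smooth_cone K" and pf: "p \<in> frontier K" and p0: "p \<noteq> 0"
  shows "\<exists>e. norm e = 1 \<and> e \<in> normal_cone K p \<and> (\<forall>v\<in>normal_cone K p. v = norm v *\<^sub>R e)"
proof -
  have reg: "regular_cone K" using sm by (simp add: smooth_cone_def)
  have pK: "p \<in> K" using pf regular_props(3)[OF reg] by (simp add: frontier_def)
  obtain R where R: "extreme_ray K R" "p \<in> R" using sm pf by (auto simp: smooth_cone_def)
  define N where "N = normal_cone K p"
  have ad: "aff_dim N = 1" using sm R p0 by (auto simp: smooth_cone_def N_def)
  have N0: "0 \<in> N" using pK by (simp add: N_def nc_iff)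
  have "aff_dim N = int (dim ((+) (- 0) ` N))"
    by (rule aff_dim_eq_dim) (simp add: N0 hull_inc)
  then have dN: "dim N = 1" using ad by simp
  obtain u where u: "u \<in> N" "u \<noteq> 0"
  proof -
    have "\<not> N \<subseteq> {0}"
    proof
      assume "N \<subseteq> {0}"
      then have "dim N \<le> dim {0::'a}" by (rule dim_subset)
      then show False using dN by simp
    qed
    then show ?thesis using that by blast
  qed
  have sp: "\<exists>k. v = k *\<^sub>R u" if v: "v \<in> N" for v
  proof (rule ccontr)
    assume "\<nexists>k. v = k *\<^sub>R u"
    then have nv: "v \<notin> span {u}" by (auto simp: span_singleton)
    have ind: "independent {v, u}"
      using nv u(2) by (simp add: independent_insert)
    have "v \<noteq> u" using nv by (metis span_base singletonI)
    then have "card {v, u} = 2" by simp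
    moreover have "card {v,u} \<le> dim N" using ind v u(1) by (intro independent_card_le_dim) auto
    ultimately show False using dN by simp
  qed
  have pos: "k \<ge> 0" if "k *\<^sub>R u \<in> N" "k \<noteq> 0" for k
  proof (rule ccontr)
    assume "\<not> k \<ge> 0"
    then have "(-1/k) *\<^sub>R (k *\<^sub>R u) \<in> N" using that unfolding N_def by (intro nc_scale[of "k *\<^sub>R u"]) auto
    then have "- u \<in> N" using that(2) by simp
    then have "u = 0" using u(1) nc_pm[OF reg] by (auto simp: N_def)
    then show False using u by simp
  qed
  define e where "e = (1/norm u) *\<^sub>R u"
  have ne: "norm e = 1" using u by (simp add: e_def)
  have eN: "e \<in> N" using u by (simp add: e_def N_def nc_scale)
  have "v = norm v *\<^sub>R e" if vN: "v \<in> N" for v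
  proof -
    obtain k where k: "v = k *\<^sub>R u" using sp[OF vN] by blast
    show ?thesis
    proof (cases "k = 0")
      case True then show ?thesis using k by simp
    next
      case False
      then have "k \<ge> 0" using pos k vN by blast
      then show ?thesis using k u(2) by (simp add: e_def)
    qed
  qed
  then show ?thesis using ne eN by (auto simp: N_def)
qed


lemma closest_dot:
  fixes K :: "'a::euclidean_space set"
  assumes "convex K" "closed K" "y \<in> K" "k \<in> K" "\<forall>k\<in>K. dist z y \<le> dist z k"
  shows "inner ((1/norm (z - y)) *\<^sub>R (z - y)) (k - y) \<le> 0"
proof -
  have "inner (z - y) (k - y) \<le> 0" using any_closest_point_dot[OF assms] .
  then show ?thesis by (simp add: divide_nonpos_nonneg)
qed

lemma normal_limit:
  fixes K :: "'a::euclidean_space set"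
  assumes cl: "closed K" and cv: "convex K" and pK: "p \<in> K" and ne: "norm e = 1"
    and un: "\<forall>v\<in>normal_cone K p. v = norm v *\<^sub>R e" and d: "\<delta> > 0"
  shows "\<exists>\<epsilon>>0. \<forall>z y. z \<notin> K \<and> dist z p < \<epsilon> \<and> y \<in> K \<and> (\<forall>k\<in>K. dist z y \<le> dist z k)
            \<longrightarrow> norm ((1/norm (z - y)) *\<^sub>R (z - y) - e) < \<delta>"
proof (rule ccontr)
  assume "\<not> ?thesis"
  then have "\<forall>n::nat. \<exists>w. fst w \<notin> K \<and> dist (fst w) p < inverse (real (Suc n)) \<and> snd w \<in> K
      \<and> (\<forall>k\<in>K. dist (fst w) (snd w) \<le> dist (fst w) k)
      \<and> norm ((1/norm (fst w - snd w)) *\<^sub>R (fst w - snd w) - e) \<ge> \<delta>"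
    by (metis fst_conv snd_conv not_less of_nat_0_less_iff positive_imp_inverse_positive zero_less_Suc)
  then obtain w where w: "\<And>n. fst (w n) \<notin> K \<and> dist (fst (w n)) p < inverse (real (Suc n)) \<and> snd (w n) \<in> K
      \<and> (\<forall>k\<in>K. dist (fst (w n)) (snd (w n)) \<le> dist (fst (w n)) k)
      \<and> norm ((1/norm (fst (w n) - snd (w n))) *\<^sub>R (fst (w n) - snd (w n)) - e) \<ge> \<delta>"
    by metis
  define z where "z n = fst (w n)" for n
  define y where "y n = snd (w n)" for n
  define v where "v n = (1/norm (z n - y n)) *\<^sub>R (z n - y n)" for n
  have zK: "z n \<notin> K" and zp: "dist (z n) p < inverse (real (Suc n))" and yK: "y n \<in> K"
    and yc: "\<forall>k\<in>K. dist (z n) (y n) \<le> dist (z n) k" and vd: "norm (v n - e) \<ge> \<delta>" for n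
    using w[of n] by (auto simp: z_def y_def v_def)
  have zy: "z n \<noteq> y n" for n using zK yK by metis
  have nv: "norm (v n) = 1" for n using zy[of n] by (simp add: v_def)
  have "bounded (range v)" using nv by (auto simp: bounded_iff)
  then obtain l r where r: "strict_mono r" "(v \<circ> r) \<longlonglongrightarrow> l"
    using bounded_imp_convergent_subsequence by blast
  have "(\<lambda>n. norm ((v \<circ> r) n)) \<longlonglongrightarrow> norm l" by (intro tendsto_norm r)
  moreover have "(\<lambda>n. norm ((v \<circ> r) n)) = (\<lambda>n. 1)" using nv by auto
  ultimately have nl: "norm l = 1" using LIMSEQ_unique tendsto_const by metis
  have yp: "y \<longlonglongrightarrow> p"
  proof -
    have "dist (y n) p \<le> 2 * inverse (real (Suc n))" for n
    proof -
      have "dist (z n) (y n) \<le> dist (z n) p" using yc[of n] pK by auto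
      then have "dist (y n) p \<le> 2 * dist (z n) p" using dist_triangle[of "y n" p "z n"] by (simp add: dist_commute)
      then show ?thesis using zp[of n] by linarith
    qed
    then have "\<forall>\<^sub>F n in sequentially. norm (y n - p) \<le> 2 * inverse (real (Suc n))"
      by (simp add: dist_norm)
    moreover have "(\<lambda>n. 2 * inverse (real (Suc n))) \<longlonglongrightarrow> 0"
      using tendsto_mult_right_zero[OF LIMSEQ_inverse_real_of_nat] by simp
    ultimately have "(\<lambda>n. y n - p) \<longlonglongrightarrow> 0" by (rule Lim_null_comparison)
    then show ?thesis by (simp add: LIM_zero_iff)
  qed
  have lN: "l \<in> normal_cone K p"
  proof -
    have "inner l (k - p) \<le> 0" if k: "k \<in> K" for k
    proof -
      have "(\<lambda>n. inner ((v \<circ> r) n) (k - (y \<circ> r) n)) \<longlonglongrightarrow> inner l (k - p)"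
        by (intro tendsto_inner tendsto_diff r tendsto_const LIMSEQ_subseq_LIMSEQ[OF yp r(1)])
      moreover have "inner ((v \<circ> r) n) (k - (y \<circ> r) n) \<le> 0" for n
        unfolding o_def v_def by (rule closest_dot[OF cv cl yK k yc])
      ultimately show ?thesis by (intro LIMSEQ_le_const2) auto
    qed
    then show ?thesis using pK by (simp add: nc_iff)
  qed
  then have "l = e" using un nl by auto
  then have "(\<lambda>n. norm ((v \<circ> r) n - e)) \<longlonglongrightarrow> norm (e - e)"
    using r by (intro tendsto_norm tendsto_diff tendsto_const) (auto simp: o_def)
  then have "\<delta> \<le> norm (e - e)" using vd by (intro LIMSEQ_le_const) auto
  then show False using d by simp
qed


lemma farkas1:
  fixes a g :: "'a::real_inner"
  assumes a: "a \<noteq> 0" and H: "\<forall>h. inner a h < 0 \<longrightarrow> inner g h \<le> 0"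
  shows "\<exists>l\<ge>0. g = l *\<^sub>R a"
proof -
  have na: "inner a a > 0" using a by simp
  have orth: "inner g h \<le> 0" if h: "inner a h = 0" for h
  proof -
    have s: "inner g h \<le> s * inner g a" if "s > 0" for s
    proof -
      have "inner a (h - s *\<^sub>R a) < 0" using h na that by (simp add: inner_diff_right)
      then have "inner g (h - s *\<^sub>R a) \<le> 0" using H by blast
      then show ?thesis by (simp add: inner_diff_right)
    qed
    show ?thesis
    proof (cases "inner g a \<le> 0")
      case True then show ?thesis using s[of 1] by simp
    next
      case False
      show ?thesis
      proof (rule ccontr)
        assume "\<not> inner g h \<le> 0"
        then have "inner g h \<le> (inner g h / (2 * inner g a)) * inner g a"
          using False by (intro s) auto
        then show False using False \<open>\<not> inner g h \<le> 0\<close> by (simp add: field_simps)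
      qed
    qed
  qed
  define l where "l = inner g a / inner a a"
  define h where "h = g - l *\<^sub>R a"
  have ah: "inner a h = 0" using na by (simp add: h_def l_def inner_diff_right inner_commute)
  have "inner g h \<le> 0" using orth[OF ah] .
  moreover have "inner g (- h) \<le> 0" using orth[of "-h"] ah by simp
  ultimately have gh: "inner g h = 0" by simp
  have "inner h h = inner g h - l * inner a h" by (simp add: h_def inner_diff_left inner_commute)
  then have "h = 0" using gh ah by simp
  moreover have "l \<ge> 0"
  proof -
    have "inner a (- a) < 0" using na by simp
    then have "inner g (-a) \<le> 0" using H by blast
    then show ?thesis using na by (simp add: l_def)
  qed
  ultimately show ?thesis by (auto simp: h_def)
qed


lemma smooth_props:
  assumes "smooth_cone K"
  shows "cone K" "convex K" "closed K" "regular_cone K"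
  using assms by (auto simp: smooth_cone_def regular_cone_def)

lemma in_frontier_or_interior:
  assumes "closed K" "p \<in> K" "p \<notin> interior K" shows "p \<in> frontier K"
  using assms by (simp add: frontier_def closure_closed)

lemma ACQ_ii:
  fixes K :: "'b::euclidean_space set" and A :: "'a::euclidean_space \<Rightarrow> 'b"
  assumes sm: "smooth_cone K" and lin: "linear A" and d: "d \<in> range A" "d \<in> K" "d \<noteq> 0"
    and bL: "b \<notin> range A"
  shows "ACQ A b K"
  unfolding ACQ_def
proof
  fix x assume "x \<in> {x. A x + b \<in> K}"
  then have pK: "A x + b \<in> K" by simp
  define p where "p = A x + b"
  define S where "S = {x. A x + b \<in> K}"
  have cK: "cone K" and cvK: "convex K" and clK: "closed K" and reg: "regular_cone K"
    using smooth_props[OF sm] by auto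
  have xS: "x \<in> S" using pK by (simp add: S_def)
  have alin: "linear (adjoint A)" by (rule adjoint_linear[OF lin])
  show "adjoint A ` normal_cone K (A x + b) = normal_cone S x"
  proof
    show "adjoint A ` normal_cone K (A x + b) \<subseteq> normal_cone S x"
    proof
      fix g assume "g \<in> adjoint A ` normal_cone K (A x + b)"
      then obtain u where u: "u \<in> normal_cone K (A x + b)" "g = adjoint A u" by blast
      have "inner g (y - x) \<le> 0" if "y \<in> S" for y
      proof -
        have "inner g (y - x) = inner u (A y - A x)"
          using u(2) adjoint_clauses(2)[OF lin] linear_diff[OF lin] by metis
        also have "\<dots> = inner u ((A y + b) - (A x + b))" by simp
        also have "\<dots> \<le> 0" using u(1) that by (auto simp: nc_iff S_def)
        finally show ?thesis .
      qed
      then show "g \<in> normal_cone S x" using xS by (simp add: nc_iff)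
    qed
  next
    show "normal_cone S x \<subseteq> adjoint A ` normal_cone K (A x + b)"
    proof
      fix g assume gN: "g \<in> normal_cone S x"
      have gS: "inner g (y - x) \<le> 0" if "A y + b \<in> K" for y
        using gN that by (auto simp: nc_iff S_def)
      obtain B where B: "B > 0" "\<And>x. norm (A x) \<le> B * norm x" using linear_bounded_pos[OF lin] by blast
      show "g \<in> adjoint A ` normal_cone K (A x + b)"
      proof (cases "p \<in> interior K")
        case True
        obtain \<epsilon> where \<epsilon>: "\<epsilon> > 0" "ball p \<epsilon> \<subseteq> K" using True mem_interior by blast
        have "g = 0"
        proof (rule ccontr)
          assume g0: "g \<noteq> 0"
          define \<tau> where "\<tau> = \<epsilon> / (2 * B * norm g)"
          have \<tau>: "\<tau> > 0" using \<epsilon> B g0 by (simp add: \<tau>_def)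
          have "norm (A (\<tau> *\<^sub>R g)) \<le> B * (\<tau> * norm g)" using B(2)[of "\<tau> *\<^sub>R g"] \<tau> by simp
          also have "\<dots> = \<epsilon> / 2" using B g0 by (simp add: \<tau>_def)
          finally have "dist p (p + A (\<tau> *\<^sub>R g)) < \<epsilon>" using \<epsilon> by (simp add: dist_norm)
          then have "p + A (\<tau> *\<^sub>R g) \<in> K" using \<epsilon> by auto
          then have "A (x + \<tau> *\<^sub>R g) + b \<in> K" by (simp add: p_def linear_add[OF lin] algebra_simps)
          then have "inner g ((x + \<tau> *\<^sub>R g) - x) \<le> 0" by (rule gS)
          then have "\<tau> * inner g g \<le> 0" by simp
          then show False using \<tau> g0 inner_gt_zero_iff[of g] mult_pos_pos[of \<tau> "inner g g"] by linarith
        qed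
        moreover have "0 \<in> normal_cone K (A x + b)" using pK by (simp add: nc_iff)
        moreover have "adjoint A 0 = 0" using linear_0[OF alin] .
        ultimately show ?thesis by (metis image_eqI)
      next
        case False
        have pf: "p \<in> frontier K" using in_frontier_or_interior[OF clK _ False] pK by (simp add: p_def)
        have p0: "p \<noteq> 0"
        proof
          assume "p = 0"
          then have "b = A (- x)" by (simp add: p_def linear_neg[OF lin] eq_neg_iff_add_eq_0 add.commute)
          then show False using bL by blast
        qed
        obtain e where e: "norm e = 1" "e \<in> normal_cone K p" "\<forall>v\<in>normal_cone K p. v = norm v *\<^sub>R e"
          using unique_normal[OF sm pf p0] by blast
        define a where "a = adjoint A e"
        have ae: "inner a h = inner e (A h)" for h
          using adjoint_works[OF lin, of h e] by (simp add: a_def inner_commute)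
        have a0: "a \<noteq> 0"
        proof
          assume "a = 0"
          then have eA: "inner e (A y) = 0" for y using ae by simp
          have "0 \<in> K" using cK pK unfolding cone_def p_def by (metis scaleR_zero_left order_refl)
          then have e1: "inner e (0 - p) \<le> 0" using e(2) by (auto simp: nc_iff simp del: inner_zero_right)
          have e2: "inner e (2 *\<^sub>R p - p) \<le> 0" using e(2) cK pK by (auto simp: nc_iff p_def cone_def)
          have ep: "inner e p = 0" using e1 e2 by (simp add: algebra_simps)
          obtain xd where xd: "d = A xd" using d(1) by blast
          have ed: "inner e d = 0" using eA xd by simp
          have mK: "p + d \<in> K" using cone_add[OF cK cvK _ d(2)] pK by (simp add: p_def)
          have "p + d \<notin> interior K"
          proof
            assume "p + d \<in> interior K"
            then have "inner e ((p + d) - p) < 0" using nc_int[OF e(2)] e(1) by fastforce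
            then show False using ed by simp
          qed
          then have "p + d \<in> frontier K" using in_frontier_or_interior[OF clK mK] by simp
          then obtain l where "p = l *\<^sub>R d" using face_lemma[OF sm _ d(2) d(3)] pK by (auto simp: p_def)
          then have "b = A (l *\<^sub>R xd - x)" using xd by (simp add: p_def linear_diff[OF lin] linear_scale[OF lin] algebra_simps)
          then show False using bL by blast
        qed
        have feas: "inner g h \<le> 0" if ah: "inner a h < 0" for h
        proof -
          define k where "k = A h"
          have ek: "inner e k < 0" using ah ae by (simp add: k_def)
          then have k0: "k \<noteq> 0" by auto
          define \<delta> where "\<delta> = - inner e k / (2 * norm k)"
          have \<delta>: "\<delta> > 0" using ek k0 by (simp add: \<delta>_def divide_neg_pos)
          obtain \<epsilon> where \<epsilon>: "\<epsilon> > 0" and NL: "\<And>z y. z \<notin> K \<and> dist z p < \<epsilon> \<and> y \<in> K \<and> (\<forall>k\<in>K. dist z y \<le> dist z k)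
            \<Longrightarrow> norm ((1/norm (z - y)) *\<^sub>R (z - y) - e) < \<delta>"
            using normal_limit[OF clK cvK _ e(1) e(3) \<delta>] pK by (auto simp: p_def)
          define \<tau> where "\<tau> = \<epsilon> / (2 * norm k)"
          have \<tau>: "\<tau> > 0" using \<epsilon> k0 by (simp add: \<tau>_def)
          define z where "z = p + \<tau> *\<^sub>R k"
          have zp: "dist z p < \<epsilon>" using \<epsilon> k0 by (simp add: z_def dist_norm \<tau>_def)
          have zK: "z \<in> K"
          proof (rule ccontr)
            assume zK: "z \<notin> K"
            have "K \<noteq> {}" using pK by auto
            then obtain y where y: "y \<in> K" "infdist z K = dist z y" using infdist_attains_inf[OF clK] by blast
            have yc: "\<forall>k\<in>K. dist z y \<le> dist z k" using y infdist_le by metis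
            define v where "v = (1/norm (z - y)) *\<^sub>R (z - y)"
            have vd: "norm (v - e) < \<delta>" using NL[of z y] zK zp y yc by (simp add: v_def)
            have zy: "z \<noteq> y" using zK y by auto
            have v1: "inner v (p - y) \<le> 0" unfolding v_def using closest_dot[OF cvK clK y(1) _ yc] pK by (simp add: p_def)
            have v2: "inner v (z - y) > 0" using zy by (simp add: v_def)
            have "z - y = (p - y) + \<tau> *\<^sub>R k" by (simp add: z_def)
            then have "inner v (z - y) = inner v (p - y) + \<tau> * inner v k" by (simp only: inner_add_right inner_scaleR_right)
            then have "\<tau> * inner v k > 0" using v1 v2 by linarith
            then have vk: "inner v k > 0" using \<tau> by (simp add: zero_less_mult_iff)
            have "inner (v - e) k \<le> norm (v - e) * norm k" by (rule norm_cauchy_schwarz)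
            also have "\<dots> \<le> \<delta> * norm k" using vd by (intro mult_right_mono) auto
            also have "\<dots> = - inner e k / 2" using k0 by (simp add: \<delta>_def)
            finally have "inner v k - inner e k \<le> - inner e k / 2" by (simp add: inner_diff_left)
            then show False using vk ek by linarith
          qed
          then have "A (x + \<tau> *\<^sub>R h) + b \<in> K"
            by (simp add: z_def p_def k_def linear_add[OF lin] linear_scale[OF lin] algebra_simps)
          then have "inner g ((x + \<tau> *\<^sub>R h) - x) \<le> 0" by (rule gS)
          then have "\<tau> * inner g h \<le> 0" by simp
          then show ?thesis using \<tau> by (simp add: mult_le_0_iff)
        qed
        obtain l where l: "l \<ge> 0" "g = l *\<^sub>R a" using farkas1[OF a0] feas by blast
        have "g = adjoint A (l *\<^sub>R e)" using l(2) linear_scale[OF alin] by (simp add: a_def)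
        moreover have "l *\<^sub>R e \<in> normal_cone K (A x + b)" using nc_scale[OF e(2) l(1)] by (simp add: p_def)
        ultimately show ?thesis by blast
      qed
    qed
  qed
qed


lemma LK_ray:
  fixes K :: "'b::euclidean_space set" and A :: "'a::euclidean_space \<Rightarrow> 'b"
  assumes sm: "smooth_cone K" and lin: "linear A" and d: "d \<in> range A" "d \<in> K" "d \<noteq> 0"
    and fr: "range A \<inter> K \<subseteq> frontier K" and z: "z \<in> range A" "z \<in> K"
  shows "\<exists>l\<ge>0. z = l *\<^sub>R d"
proof -
  obtain xz xd where "z = A xz" "d = A xd" using z d by blast
  then have "z + d \<in> range A" using linear_add[OF lin] by (metis rangeI)
  moreover have "z + d \<in> K" using cone_add smooth_props[OF sm] z d by blast
  ultimately have "z + d \<in> frontier K" using fr by blast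
  then show ?thesis using face_lemma[OF sm z(2) d(2) d(3)] by blast
qed

lemma exists_orth:
  fixes A :: "'a::euclidean_space \<Rightarrow> 'b::euclidean_space"
  assumes lin: "linear A" and d: "d \<in> range A" "d \<noteq> 0" and dm: "dim (range A) \<noteq> 1"
  shows "\<exists>w\<in>range A. w \<noteq> 0 \<and> inner w d = 0"
proof (rule ccontr)
  assume H: "\<not> ?thesis"
  have "range A \<subseteq> span {d}"
  proof
    fix z assume z: "z \<in> range A"
    define c where "c = inner z d / inner d d"
    obtain xz xd where xz: "z = A xz" "d = A xd" using z d by blast
    have "z - c *\<^sub>R d = A (xz - c *\<^sub>R xd)" using xz by (simp add: linear_diff[OF lin] linear_scale[OF lin])
    then have zL: "z - c *\<^sub>R d \<in> range A" by simp
    have "inner (z - c *\<^sub>R d) d = 0" using d(2) by (simp add: c_def inner_diff_left)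
    then have "z - c *\<^sub>R d = 0" using H zL by blast
    then have "z = c *\<^sub>R d" by simp
    then show "z \<in> span {d}" by (simp add: span_base span_scale)
  qed
  then have "dim (range A) \<le> dim (span {d})" by (rule dim_subset)
  then have "dim (range A) \<le> 1" using d(2) by simp
  moreover have "dim {d} \<le> dim (range A)" using d(1) by (intro dim_subset) auto
  ultimately show False using dm d(2) by simp
qed

lemma notACQ_i:
  fixes K :: "'b::euclidean_space set" and A :: "'a::euclidean_space \<Rightarrow> 'b"
  assumes sm: "smooth_cone K" and lin: "linear A" and d: "d \<in> range A" "d \<in> K" "d \<noteq> 0"
    and fr: "range A \<inter> K \<subseteq> frontier K" and bL: "b \<in> range A"
    and w: "w \<in> range A" "w \<noteq> 0" "inner w d = 0"
  shows "\<not> ACQ A b K"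
proof
  assume acq: "ACQ A b K"
  obtain x0 xd xw where x: "b = A x0" "d = A xd" "w = A xw" using bL d w by blast
  define x1 where "x1 = xd - x0"
  have x1: "A x1 + b = d" using x by (simp add: x1_def linear_diff[OF lin])
  define S where "S = {x. A x + b \<in> K}"
  define g where "g = adjoint A w"
  have orth: "inner g (y - x1) = 0" if "y \<in> S" for y
  proof -
    have "A y + b = A (y + x0)" using x by (simp add: linear_add[OF lin])
    then have yr: "A y + b \<in> range A" by simp
    have yk: "A y + b \<in> K" using that by (simp add: S_def)
    obtain l where l: "A y + b = l *\<^sub>R d" using LK_ray[OF sm lin d fr yr yk] by blast
    have "inner g (y - x1) = inner w (A y - A x1)"
      using adjoint_clauses(2)[OF lin] linear_diff[OF lin] by (metis g_def)
    also have "\<dots> = inner w ((A y + b) - (A x1 + b))" by simp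
    also have "\<dots> = 0" using l x1 w(3) by (simp add: inner_diff_right)
    finally show ?thesis .
  qed
  have x1S: "x1 \<in> S" using x1 d by (simp add: S_def)
  have gN: "g \<in> normal_cone S x1" "- g \<in> normal_cone S x1" using orth x1S by (auto simp: nc_iff)
  have g0: "g \<noteq> 0"
  proof
    assume "g = 0"
    then have "inner w (A xw) = 0" using adjoint_clauses(2)[OF lin, of w xw] by (simp add: g_def)
    then show False using x(3) w(2) by simp
  qed
  have eq: "adjoint A ` normal_cone K d = normal_cone S x1"
    using acq x1S unfolding ACQ_def S_def by (metis x1 mem_Collect_eq)
  obtain u1 u2 where u: "u1 \<in> normal_cone K d" "g = adjoint A u1" "u2 \<in> normal_cone K d" "- g = adjoint A u2"
    using gN eq by (metis imageE)
  have df: "d \<in> frontier K" using fr d by blast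
  obtain e where e: "norm e = 1" "e \<in> normal_cone K d" "\<forall>v\<in>normal_cone K d. v = norm v *\<^sub>R e"
    using unique_normal[OF sm df d(3)] by blast
  have alin: "linear (adjoint A)" by (rule adjoint_linear[OF lin])
  have g1: "g = norm u1 *\<^sub>R adjoint A e" using u(2) e(3) u(1) linear_scale[OF alin] by metis
  have g2: "- g = norm u2 *\<^sub>R adjoint A e" using u(4) e(3) u(3) linear_scale[OF alin] by metis
  have "(norm u1 + norm u2) *\<^sub>R adjoint A e = 0" using g1 g2 by (metis scaleR_add_left neg_eq_iff_add_eq_0)
  moreover have "norm u1 \<noteq> 0" using g1 g0 by auto
  ultimately have "adjoint A e = 0" by (simp add: add_nonneg_eq_0_iff)
  then show False using g1 g0 by simp
qed


lemma infdist_geI: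
  assumes "S \<noteq> {}" "\<And>y. y \<in> S \<Longrightarrow> c \<le> dist x y" shows "c \<le> infdist x S"
  using assms unfolding infdist_def by (auto intro: cINF_greatest)

lemma notGEB0:
  fixes K :: "'b::euclidean_space set" and A :: "'a::euclidean_space \<Rightarrow> 'b"
  assumes sm: "smooth_cone K" and lin: "linear A" and d: "d \<in> range A" "d \<in> K" "d \<noteq> 0"
    and fr: "range A \<inter> K \<subseteq> frontier K"
    and w: "w \<in> range A" "w \<noteq> 0" "inner w d = 0"
  shows "\<not> global_error_bound A 0 K"
proof
  assume "global_error_bound A 0 K"
  then obtain \<alpha> where \<alpha>: "\<alpha> > 0" "\<And>x. infdist x {x. A x \<in> K} \<le> \<alpha> * infdist (A x) K"
    by (auto simp: global_error_bound_def)
  obtain B where B: "B > 0" "\<And>x. norm (A x) \<le> B * norm x" using linear_bounded_pos[OF lin] by blast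
  have cK: "cone K" and cvK: "convex K" and clK: "closed K" and reg: "regular_cone K"
    using smooth_props[OF sm] by auto
  define c where "c = 1 / (\<alpha> * B)"
  have c: "c > 0" using \<alpha> B by (simp add: c_def)
  have df: "d \<in> frontier K" using fr d by blast
  obtain e where e: "norm e = 1" "e \<in> normal_cone K d" "\<forall>v\<in>normal_cone K d. v = norm v *\<^sub>R e"
    using unique_normal[OF sm df d(3)] by blast
  obtain \<epsilon>0 where \<epsilon>0: "\<epsilon>0 > 0" and NL: "\<And>z y. z \<notin> K \<and> dist z d < \<epsilon>0 \<and> y \<in> K \<and> (\<forall>k\<in>K. dist z y \<le> dist z k)
            \<Longrightarrow> norm ((1/norm (z - y)) *\<^sub>R (z - y) - e) < c/2"
    using normal_limit[OF clK cvK d(2) e(1) e(3), of "c/2"] c by auto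
  have key: "inner e w' \<ge> c/2" if w': "w' \<in> range A" "norm w' = 1" "inner w' d = 0" for w'
  proof -
    define \<epsilon> where "\<epsilon> = \<epsilon>0 / 2"
    have \<epsilon>: "\<epsilon> > 0" "\<epsilon> < \<epsilon>0" using \<epsilon>0 by (auto simp: \<epsilon>_def)
    obtain xd xw where xx: "d = A xd" "w' = A xw" using d w' by blast
    define x where "x = xd + \<epsilon> *\<^sub>R xw"
    define z where "z = d + \<epsilon> *\<^sub>R w'"
    have Ax: "A x = z" using xx by (simp add: x_def z_def linear_add[OF lin] linear_scale[OF lin])
    have "0 \<in> K" using cK d(2) unfolding cone_def by (metis scaleR_zero_left order_refl)
    then have S0: "{x. A x \<in> K} \<noteq> {}" using linear_0[OF lin] by (metis empty_iff mem_Collect_eq)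
    have "\<epsilon> / B \<le> infdist x {x. A x \<in> K}"
    proof (rule infdist_geI[OF S0])
      fix y assume "y \<in> {x. A x \<in> K}"
      then have "A y \<in> K" by simp
      then obtain l where l: "A y = l *\<^sub>R d" using LK_ray[OF sm lin d fr _ ] by blast
      have ww: "inner w' w' = 1" using w'(2) by (metis power2_norm_eq_inner one_power2)
      have dw: "inner d w' = 0" using w'(3) by (simp add: inner_commute)
      have "\<epsilon> = inner (z - A y) w'" using dw l ww
        by (simp add: z_def inner_diff_left inner_add_left)
      also have "\<dots> \<le> norm (z - A y) * norm w'" by (rule norm_cauchy_schwarz)
      also have "\<dots> = norm (A (x - y))" using w'(2) Ax by (simp add: linear_diff[OF lin])
      also have "\<dots> \<le> B * dist x y" using B(2)[of "x - y"] by (simp add: dist_norm)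
      finally show "\<epsilon> / B \<le> dist x y" using B by (simp add: field_simps)
    qed
    then have "\<epsilon> / B \<le> \<alpha> * infdist z K" using \<alpha>(2)[of x] Ax by simp
    then have zK_lb: "c * \<epsilon> \<le> infdist z K" using \<alpha> B by (simp add: c_def field_simps)
    have zK: "z \<notin> K" using zK_lb mult_pos_pos[OF c \<epsilon>(1)] by auto
    have "K \<noteq> {}" using d by auto
    then obtain y where y: "y \<in> K" "infdist z K = dist z y" using infdist_attains_inf[OF clK] by blast
    have yc: "\<forall>k\<in>K. dist z y \<le> dist z k" using y infdist_le by metis
    define v where "v = (1/norm (z - y)) *\<^sub>R (z - y)"
    have zd: "dist z d < \<epsilon>0" using \<epsilon> w'(2) by (simp add: z_def dist_norm)
    have vd: "norm (v - e) < c/2" using NL[of z y] zK zd y yc by (simp add: v_def)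
    have zy: "z \<noteq> y" using zK y by auto
    have v1: "inner v (d - y) \<le> 0" unfolding v_def using closest_dot[OF cvK clK y(1) d(2) yc] .
    have v2: "inner v (z - y) = norm (z - y)" using zy by (simp add: v_def power2_norm_eq_inner[symmetric] power2_eq_square)
    have "norm (z - y) \<ge> c * \<epsilon>" using zK_lb y(2) by (simp add: dist_norm)
    have "z - y = (d - y) + \<epsilon> *\<^sub>R w'" by (simp add: z_def)
    then have "inner v (z - y) = inner v (d - y) + \<epsilon> * inner v w'" by (simp only: inner_add_right inner_scaleR_right)
    then have "\<epsilon> * inner v w' \<ge> \<epsilon> * c" using v1 v2 \<open>norm (z - y) \<ge> c * \<epsilon>\<close> by (simp add: mult.commute)
    then have vw: "inner v w' \<ge> c" using \<epsilon> by simp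
    have "inner (v - e) w' \<le> norm (v - e) * norm w'" by (rule norm_cauchy_schwarz)
    then have "inner (v - e) w' \<le> c/2" using vd w'(2) by simp
    then show ?thesis using vw by (simp add: inner_diff_left)
  qed
  define w1 where "w1 = (1/norm w) *\<^sub>R w"
  obtain xw where xw: "w = A xw" using w by blast
  have "w1 = A ((1/norm w) *\<^sub>R xw)" using xw by (simp add: w1_def linear_scale[OF lin])
  then have w1a: "w1 \<in> range A" by (metis rangeI)
  have w1: "w1 \<in> range A" "norm w1 = 1" "inner w1 d = 0" using w1a w(2,3) by (auto simp: w1_def)
  have w2: "- w1 \<in> range A" "norm (- w1) = 1" "inner (- w1) d = 0" using w1 linear_neg[OF lin]
    by (auto, metis rangeE rangeI)
  have "inner e w1 \<ge> c/2" "inner e (- w1) \<ge> c/2" using key[OF w1] key[OF w2] by auto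
  then show False using c by simp
qed


lemma closed_S:
  fixes A :: "'a::euclidean_space \<Rightarrow> 'b::euclidean_space"
  assumes lin: "linear A" and cl: "closed K"
  shows "closed {x. A x + b \<in> K}"
proof -
  have "{x. A x + b \<in> K} = (\<lambda>x. A x + b) -` K" by auto
  moreover have "continuous (at x) (\<lambda>x. A x + b)" for x
    using lin by (intro continuous_intros linear_continuous_at) (simp add: linear_conv_bounded_linear)
  ultimately show ?thesis by (metis continuous_closed_vimage[OF cl])
qed

lemma geb_zero:
  fixes K :: "'b::euclidean_space set" and A :: "'a::euclidean_space \<Rightarrow> 'b"
  assumes cK: "cone K" and clK: "closed K" and lin: "linear A"
    and geb: "global_error_bound A b K" and ne: "{x. A x + b \<in> K} \<noteq> {}"
  shows "global_error_bound A 0 K"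
proof -
  obtain \<alpha> where \<alpha>: "\<alpha> > 0" "\<And>x. infdist x {x. A x + b \<in> K} \<le> \<alpha> * infdist (A x + b) K"
    using geb by (auto simp: global_error_bound_def)
  have Kne: "K \<noteq> {}" using ne by auto
  have bl: "bounded_linear A" using lin by (simp add: linear_conv_bounded_linear)
  have "infdist x {x. A x \<in> K} \<le> \<alpha> * infdist (A x) K" for x
  proof -
    define D where "D = infdist (A x) K"
    have step: "\<exists>y. A y + t *\<^sub>R b \<in> K \<and> dist x y \<le> \<alpha> * (D + t * norm b)" if t: "t > 0" for t
    proof -
      define x' where "x' = (1/t) *\<^sub>R x"
      obtain y' where y': "y' \<in> {x. A x + b \<in> K}" "infdist x' {x. A x + b \<in> K} = dist x' y'"
        using infdist_attains_inf[OF closed_S[OF lin clK] ne] by blast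
      obtain k where k: "k \<in> K" "infdist (A x + t *\<^sub>R b) K = dist (A x + t *\<^sub>R b) k"
        using infdist_attains_inf[OF clK Kne] by blast
      have kt: "(1/t) *\<^sub>R k \<in> K" using cK k(1) t by (simp add: cone_def)
      have "dist x' y' \<le> \<alpha> * infdist (A x' + b) K" using \<alpha>(2)[of x'] y' by simp
      also have "\<dots> \<le> \<alpha> * dist (A x' + b) ((1/t) *\<^sub>R k)"
        using \<alpha>(1) infdist_le[OF kt] by (intro mult_left_mono) auto
      finally have 1: "dist x' y' \<le> \<alpha> * dist (A x' + b) ((1/t) *\<^sub>R k)" .
      have ex: "A x' + b - (1/t) *\<^sub>R k = (1/t) *\<^sub>R (A x + t *\<^sub>R b - k)"
        using t by (simp add: x'_def linear_scale[OF lin] algebra_simps)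
      have e1: "dist (A x' + b) ((1/t) *\<^sub>R k) = (1/t) * dist (A x + t *\<^sub>R b) k"
        using t by (simp only: dist_norm ex norm_scaleR) simp
      have e2: "dist x (t *\<^sub>R y') = t * dist x' y'"
      proof -
        have "x - t *\<^sub>R y' = t *\<^sub>R (x' - y')" using t by (simp add: x'_def algebra_simps)
        then show ?thesis using t by (simp add: dist_norm)
      qed
      have "dist x (t *\<^sub>R y') \<le> t * (\<alpha> * dist (A x' + b) ((1/t) *\<^sub>R k))"
        unfolding e2 using 1 t by (intro mult_left_mono) auto
      also have "\<dots> = \<alpha> * dist (A x + t *\<^sub>R b) k" unfolding e1 using t by simp
      finally have "dist x (t *\<^sub>R y') \<le> \<alpha> * dist (A x + t *\<^sub>R b) k" .
      also have "\<dots> = \<alpha> * infdist (A x + t *\<^sub>R b) K" using k by simp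
      also have "\<dots> \<le> \<alpha> * (D + t * norm b)"
      proof -
        have "infdist (A x + t *\<^sub>R b) K \<le> infdist (A x) K + dist (A x + t *\<^sub>R b) (A x)" by (rule infdist_triangle)
        also have "\<dots> = D + t * norm b" using t by (simp add: D_def dist_norm)
        finally show ?thesis using \<alpha>(1) by (intro mult_left_mono) auto
      qed
      finally have "dist x (t *\<^sub>R y') \<le> \<alpha> * (D + t * norm b)" .
      moreover have "A (t *\<^sub>R y') + t *\<^sub>R b \<in> K"
        using y' cK t by (simp add: linear_scale[OF lin] cone_def scaleR_add_right[symmetric])
      ultimately show ?thesis by blast
    qed
    define tt where "tt n = inverse (real (Suc n))" for n
    have ttp: "tt n > 0" for n by (simp add: tt_def)
    have "\<forall>n. \<exists>y. A y + tt n *\<^sub>R b \<in> K \<and> dist x y \<le> \<alpha> * (D + tt n * norm b)" using step ttp by blast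
    then obtain Y where Y: "\<And>n. A (Y n) + tt n *\<^sub>R b \<in> K" "\<And>n. dist x (Y n) \<le> \<alpha> * (D + tt n * norm b)"
      by metis
    have ttle: "tt n \<le> 1" for n unfolding tt_def by (simp add: inverse_le_1_iff)
    have "dist x (Y n) \<le> \<alpha> * (D + norm b)" for n
    proof -
      have "tt n * norm b \<le> norm b" using ttle[of n] ttp[of n] by (simp add: mult_left_le_one_le)
      then show ?thesis using Y(2)[of n] \<alpha>(1) by (smt (verit) mult_left_mono)
    qed
    then have "bounded (range Y)" unfolding bounded_def by blast
    then obtain y r where r: "strict_mono r" "(Y \<circ> r) \<longlonglongrightarrow> y"
      using bounded_imp_convergent_subsequence by blast
    have tt0: "tt \<longlonglongrightarrow> 0" unfolding tt_def by (rule LIMSEQ_inverse_real_of_nat)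
    have ttr: "(tt \<circ> r) \<longlonglongrightarrow> 0" using LIMSEQ_subseq_LIMSEQ[OF tt0 r(1)] .
    have "(\<lambda>n. A ((Y \<circ> r) n) + (tt \<circ> r) n *\<^sub>R b) \<longlonglongrightarrow> A y + 0 *\<^sub>R b"
      by (intro tendsto_add tendsto_scaleR tendsto_const bounded_linear.tendsto[OF bl] r ttr)
    then have "A y + 0 *\<^sub>R b \<in> K" using Y(1) closed_sequentially[OF clK, of "\<lambda>n. A ((Y \<circ> r) n) + (tt \<circ> r) n *\<^sub>R b"] by (simp add: o_def)
    then have yK: "A y \<in> K" by simp
    have "(\<lambda>n. dist x ((Y \<circ> r) n)) \<longlonglongrightarrow> dist x y" by (intro tendsto_dist tendsto_const r)
    moreover have "(\<lambda>n. \<alpha> * (D + (tt \<circ> r) n * norm b)) \<longlonglongrightarrow> \<alpha> * (D + 0 * norm b)"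
      by (intro tendsto_mult tendsto_add tendsto_const ttr)
    ultimately have "dist x y \<le> \<alpha> * (D + 0 * norm b)"
      using Y(2) by (intro LIMSEQ_le) (auto simp: o_def)
    then have "dist x y \<le> \<alpha> * D" by simp
    moreover have "infdist x {x. A x \<in> K} \<le> dist x y" using yK by (intro infdist_le) simp
    ultimately show ?thesis by (simp add: D_def)
  qed
  then show ?thesis using \<alpha>(1) by (auto simp: global_error_bound_def)
qed


lemma geb_iii:
  fixes K :: "'b::euclidean_space set" and A :: "'a::euclidean_space \<Rightarrow> 'b"
  assumes sm: "smooth_cone K" and lin: "linear A" and d: "d \<in> range A" "d \<in> K" "d \<noteq> 0"
    and dm: "dim (range A) = 1" and ne: "{x. A x + b \<in> K} \<noteq> {}"
  shows "global_error_bound A b K"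
proof -
  have cK: "cone K" and cvK: "convex K" and clK: "closed K" and reg: "regular_cone K"
    using smooth_props[OF sm] by auto
  have K0: "0 \<in> K" using cK d(2) unfolding cone_def by (metis scaleR_zero_left order_refl)
  have Kne: "K \<noteq> {}" using K0 by auto
  have dd: "inner d d > 0" using d(3) by simp
  define \<sigma> where "\<sigma> x = inner (A x) d / inner d d" for x
  have Ax: "A x = \<sigma> x *\<^sub>R d" for x
  proof -
    have "\<exists>s. A x = s *\<^sub>R d"
    proof (rule ccontr)
      assume "\<nexists>s. A x = s *\<^sub>R d"
      then have nv: "A x \<notin> span {d}" by (auto simp: span_singleton)
      have ind: "independent {A x, d}" using nv d(3) by (simp add: independent_insert)
      have "A x \<noteq> d" using nv by (metis span_base singletonI)
      then have "card {A x, d} = 2" by simp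
      moreover have "card {A x, d} \<le> dim (range A)" using ind d(1) by (intro independent_card_le_dim) auto
      ultimately show False using dm by simp
    qed
    then obtain s where s: "A x = s *\<^sub>R d" by blast
    then have "\<sigma> x = s" using dd by (simp add: \<sigma>_def)
    then show ?thesis using s by simp
  qed
  obtain xd where xd: "A xd = d" using d(1) by auto
  define T where "T = {t. b + t *\<^sub>R d \<in> K}"
  obtain x0 where x0: "A x0 + b \<in> K" using ne by auto
  have Tne: "T \<noteq> {}" using x0 Ax[of x0] by (auto simp: T_def add.commute)
  have Tcl: "closed T"
  proof -
    have "T = (\<lambda>t. b + t *\<^sub>R d) -` K" by (auto simp: T_def)
    moreover have "continuous (at t) (\<lambda>t. b + t *\<^sub>R d)" for t by (intro continuous_intros)
    ultimately show ?thesis by (metis continuous_closed_vimage[OF clK])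
  qed
  have md: "- d \<notin> K" using pointed[OF reg d(2)] d(3) by auto
  define \<delta> where "\<delta> = infdist (- d) K"
  have \<delta>: "\<delta> > 0" using infdist_pos_not_in_closed[OF clK Kne md] by (simp add: \<delta>_def)
  have Tlow: "- norm b / \<delta> \<le> t" if t: "t \<in> T" for t
  proof (cases "t < 0")
    case False
    have "- norm b / \<delta> \<le> 0" using \<delta> by (simp add: divide_nonpos_pos)
    then show ?thesis using False by linarith
  next
    case True
    have tK: "b + t *\<^sub>R d \<in> K" using t by (simp add: T_def)
    have "1 / (- t) \<ge> 0" using True by simp
    then have "(1 / (- t)) *\<^sub>R (b + t *\<^sub>R d) \<in> K" using cK tK unfolding cone_def by blast
    then have "\<delta> \<le> dist (- d) ((1 / (- t)) *\<^sub>R (b + t *\<^sub>R d))" unfolding \<delta>_def by (rule infdist_le)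
    also have "\<dots> = norm b / (- t)"
    proof -
      have "- d - (1 / (- t)) *\<^sub>R (b + t *\<^sub>R d) = - ((1 / (- t)) *\<^sub>R b)" using True
        by (simp add: scaleR_add_right)
      then show ?thesis using True by (simp add: dist_norm)
    qed
    finally have "\<delta> * (- t) \<le> norm b" using True by (simp add: field_simps)
    then show ?thesis using \<delta> by (simp add: field_simps)
  qed
  have bdd: "bdd_below T" using Tlow by (auto simp: bdd_below_def)
  define t0 where "t0 = Inf T"
  have t0T: "t0 \<in> T" using closed_contains_Inf[OF Tne bdd Tcl] by (simp add: t0_def)
  have t0le: "t0 \<le> t" if "t \<in> T" for t using cInf_lower[OF that bdd] by (simp add: t0_def)
  define p where "p = b + t0 *\<^sub>R d"
  have pK: "p \<in> K" using t0T by (simp add: T_def p_def)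
  have up: "b + t *\<^sub>R d \<in> K" if "t \<ge> t0" for t
  proof -
    have "(t - t0) *\<^sub>R d \<in> K" using cK d(2) that by (simp add: cone_def)
    then have "p + (t - t0) *\<^sub>R d \<in> K" using cone_add[OF cK cvK pK] by blast
    then show ?thesis by (simp add: p_def algebra_simps)
  qed
  have "\<exists>c>0. \<forall>s k. s < t0 \<longrightarrow> k \<in> K \<longrightarrow> c * (t0 - s) \<le> dist (b + s *\<^sub>R d) k"
  proof (cases "p = 0")
    case True
    have "\<delta> * (t0 - s) \<le> dist (b + s *\<^sub>R d) k" if s: "s < t0" and k: "k \<in> K" for s k
    proof -
      have tp: "t0 - s > 0" using s by simp
      have "(1 / (t0 - s)) *\<^sub>R k \<in> K" using cK k tp unfolding cone_def by (meson less_eq_real_def zero_le_divide_1_iff)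
      then have "\<delta> \<le> dist (- d) ((1 / (t0 - s)) *\<^sub>R k)" unfolding \<delta>_def by (rule infdist_le)
      moreover have "dist (b + s *\<^sub>R d) k = (t0 - s) * dist (- d) ((1 / (t0 - s)) *\<^sub>R k)"
      proof -
        have bb: "b = - (t0 *\<^sub>R d)" using True by (simp add: p_def eq_neg_iff_add_eq_0)
        have "b + s *\<^sub>R d - k = (t0 - s) *\<^sub>R (- d - (1 / (t0 - s)) *\<^sub>R k)"
          using tp by (simp add: bb algebra_simps)
        then show ?thesis using tp by (simp add: dist_norm)
      qed
      ultimately show ?thesis using tp by (simp add: mult.commute)
    qed
    then show ?thesis using \<delta> by blast
  next
    case False
    have pnot: "p \<notin> interior K"
    proof
      assume "p \<in> interior K"
      then obtain \<epsilon> where \<epsilon>: "\<epsilon> > 0" "ball p \<epsilon> \<subseteq> K" using mem_interior by blast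
      define \<eta> where "\<eta> = \<epsilon> / (2 * norm d)"
      have \<eta>: "\<eta> > 0" using \<epsilon> d(3) by (simp add: \<eta>_def)
      have "dist p (p - \<eta> *\<^sub>R d) < \<epsilon>" using \<epsilon> d(3) by (simp add: \<eta>_def dist_norm)
      then have "p - \<eta> *\<^sub>R d \<in> K" using \<epsilon> by auto
      then have "t0 - \<eta> \<in> T" by (simp add: T_def p_def algebra_simps)
      then show False using t0le \<eta> by fastforce
    qed
    have pf: "p \<in> frontier K" using in_frontier_or_interior[OF clK pK pnot] .
    obtain e where e: "norm e = 1" "e \<in> normal_cone K p" using unique_normal[OF sm pf False] by blast
    have pdK: "p + d \<in> K" using cone_add[OF cK cvK pK d(2)] .
    have ed: "inner e d \<le> 0" using e(2) pdK by (auto simp: nc_iff)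
    have ed': "inner e d \<noteq> 0"
    proof
      assume ed0: "inner e d = 0"
      have "p + d \<notin> interior K"
      proof
        assume "p + d \<in> interior K"
        then have "inner e ((p + d) - p) < 0" using nc_int[OF e(2)] e(1) by fastforce
        then show False using ed0 by simp
      qed
      then have "p + d \<in> frontier K" using in_frontier_or_interior[OF clK pdK] by simp
      then obtain l where l: "l \<ge> 0" "p = l *\<^sub>R d" using face_lemma[OF sm pK d(2) d(3)] by blast
      then have "b + (t0 - l) *\<^sub>R d = 0" by (simp add: p_def algebra_simps)
      then have "t0 - l \<in> T" using K0 by (simp add: T_def)
      then have "l \<le> 0" using t0le by fastforce
      then have "p = 0" using l by simp
      then show False using False by simp
    qed
    define c where "c = - inner e d"
    have c: "c > 0" using ed ed' by (simp add: c_def)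
    have "c * (t0 - s) \<le> dist (b + s *\<^sub>R d) k" if s: "s < t0" and k: "k \<in> K" for s k
    proof -
      have ek: "inner e (k - p) \<le> 0" using e(2) k by (simp add: nc_iff)
      have eq: "b + s *\<^sub>R d - k = (p - k) - (t0 - s) *\<^sub>R d" by (simp add: p_def algebra_simps)
      have "inner e (b + s *\<^sub>R d - k) = inner e (p - k) + (t0 - s) * c"
        unfolding eq by (simp add: inner_diff_right c_def)
      moreover have "inner e (p - k) \<ge> 0" using ek by (simp add: inner_diff_right)
      moreover have "inner e (b + s *\<^sub>R d - k) \<le> norm e * norm (b + s *\<^sub>R d - k)" by (rule norm_cauchy_schwarz)
      ultimately show ?thesis using e(1) by (simp add: dist_norm mult.commute)
    qed
    then show ?thesis using c by blast
  qed
  then obtain c where c: "c > 0" and lb: "\<And>s k. s < t0 \<Longrightarrow> k \<in> K \<Longrightarrow> c * (t0 - s) \<le> dist (b + s *\<^sub>R d) k"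
    by blast
  define \<alpha> where "\<alpha> = (norm xd + 1) / c"
  have "infdist x {x. A x + b \<in> K} \<le> \<alpha> * infdist (A x + b) K" for x
  proof (cases "\<sigma> x \<ge> t0")
    case True
    then have "x \<in> {x. A x + b \<in> K}" using up[OF True] Ax[of x] by (simp add: add.commute)
    then show ?thesis using c by (simp add: \<alpha>_def infdist_nonneg)
  next
    case False
    define s where "s = \<sigma> x"
    have s: "s < t0" using False by (simp add: s_def)
    define x' where "x' = x + (t0 - s) *\<^sub>R xd"
    have "A x' = A x + (t0 - s) *\<^sub>R A xd" by (simp only: x'_def linear_add[OF lin] linear_scale[OF lin])
    also have "\<dots> = s *\<^sub>R d + (t0 - s) *\<^sub>R d" using Ax[of x] xd by (simp add: s_def)
    finally have "A x' + b = b + t0 *\<^sub>R d" by (simp add: algebra_simps)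
    moreover have "b + t0 *\<^sub>R d \<in> K" using t0T by (simp add: T_def)
    ultimately have "x' \<in> {x. A x + b \<in> K}" by (simp only: mem_Collect_eq)
    then have "infdist x {x. A x + b \<in> K} \<le> dist x x'" by (rule infdist_le)
    also have "\<dots> = (t0 - s) * norm xd" using s by (simp add: x'_def dist_norm)
    also have "\<dots> \<le> \<alpha> * (c * (t0 - s))" using c s by (simp add: \<alpha>_def field_simps)
    also have "\<dots> \<le> \<alpha> * infdist (A x + b) K"
    proof -
      have "c * (t0 - s) \<le> infdist (A x + b) K"
        using Kne lb[OF s] Ax[of x] by (intro infdist_geI) (auto simp: s_def add.commute)
      then show ?thesis using c by (intro mult_left_mono) (auto simp: \<alpha>_def)
    qed
    finally show ?thesis .
  qed
  moreover have "\<alpha> > 0" using c unfolding \<alpha>_def by (intro divide_pos_pos) (auto intro: add_nonneg_pos)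
  ultimately show ?thesis unfolding global_error_bound_def by blast
qed


theorem theorem5:
  fixes K :: "(real^'m) set" and A :: "real^'n \<Rightarrow> real^'m" and b :: "real^'m"
  assumes "smooth_cone K" and "linear A"
    and "{x. A x + b \<in> K} \<noteq> {}"
    and "range A \<inter> K \<noteq> {0}" and "range A \<inter> K \<subseteq> frontier K"
  shows "(dim (range A) \<noteq> 1 \<and> b \<in> range A \<longrightarrow> \<not> ACQ A b K \<and> \<not> global_error_bound A b K)
    \<and> (dim (range A) \<noteq> 1 \<and> b \<notin> range A \<longrightarrow> ACQ A b K \<and> \<not> global_error_bound A b K)
    \<and> (dim (range A) = 1 \<longrightarrow> global_error_bound A b K)"
proof -
  note sm = assms(1) and lin = assms(2) and ne = assms(3) and fr = assms(5)
  have cK: "cone K" and clK: "closed K" using smooth_props[OF sm] by auto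
  obtain x0 where "A x0 + b \<in> K" using ne by auto
  then have K0: "0 \<in> K" using cK unfolding cone_def by (metis scaleR_zero_left order_refl)
  have "0 \<in> range A \<inter> K" using K0 linear_0[OF lin] by (metis IntI rangeI)
  then obtain d where d: "d \<in> range A" "d \<in> K" "d \<noteq> 0" using assms(4) by blast
  have noGEB: "\<not> global_error_bound A b K" if dm: "dim (range A) \<noteq> 1"
  proof
    assume "global_error_bound A b K"
    then have g0: "global_error_bound A 0 K" using geb_zero[OF cK clK lin _ ne] by blast
    obtain w where w: "w \<in> range A" "w \<noteq> 0" "inner w d = 0" using exists_orth[OF lin d(1) d(3) dm] by blast
    show False using notGEB0[OF sm lin d fr w] g0 by blast
  qed
  have i: "\<not> ACQ A b K" if dm: "dim (range A) \<noteq> 1" and bL: "b \<in> range A"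
  proof -
    obtain w where w: "w \<in> range A" "w \<noteq> 0" "inner w d = 0" using exists_orth[OF lin d(1) d(3) dm] by blast
    show ?thesis using notACQ_i[OF sm lin d fr bL w] .
  qed
  have ii: "ACQ A b K" if "b \<notin> range A" using ACQ_ii[OF sm lin d that] .
  have iii: "global_error_bound A b K" if "dim (range A) = 1" using geb_iii[OF sm lin d that ne] .
  show ?thesis using noGEB i ii iii by blast
qed

end
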